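(* Fix integers $N\ge 2$ and $K\ge 1$. For any Boolean tensor $\mathcal{B}\in\{0,1\}^{N\times N\times K}$ with frontal slices $\mathbf{B}_1,\dots,\mathbf{B}_K$, and any $r\in\mathbb{N}^+$ with \[ r\ge\min\Big\{KN,\;2\sum_{k=1}^K\mathrm{rrank}(\mathbf{B}_k)\Big\},\] the set $\pi(\mathcal{M}^{\text{ComplEx}}_r)$ contains a ranking tensor consistent with $\mathcal{B}$.
   Context: A score-based model assigns a score $s_k(i,j)\in\mathbb{R}$ to each triple, $i,j\in\{1,\dots,N\}$, $k\in\{1,\dots,K\}$; its scoring tensor has frontal slices $\mathbf{S}_k$ with $[\mathbf{S}_k]_{ij}=s_k(i,j)$. For a real $N\times N$ matrix $\mathbf{S}$, $\pi(\mathbf{S})$ is the matrix of dense ranks: $\pi_{ij}(\mathbf{S})=1+$ (number of distinct values among entries of $\mathbf{S}$ strictly larger than $s_{ij}$). For tensors, $\pi$ acts slicewise; for a set $X$, $\pi(X)=\{\pi(x):x\in X\}$. ComplEx of size $r$: parameters $\mathbf{A}\in\mathbb{C}^{N\times r}$ (rows $\mathbf{a}_i$), $\mathbf{R}\in\mathbb{C}^{K\times r}$ (rows $\mathbf{r}_k$), score $\mathrm{Re}(\mathbf{a}_i^T\mathrm{diag}(\mathbf{r}_k)\overline{\mathbf{a}_j})$; $\mathcal{M}^{\text{ComplEx}}_r$ is the set of scoring tensors of such models. A ranking tensor $\mathcal{P}$ is consistent with $\mathcal{B}$ if for every $k$ and all $i,j,i',j'$: $b_{ijk}=1$ and $b_{i'j'k}=0$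 imply $p_{ijk}<p_{i'j'k}$. Rounding rank: $\mathrm{round}$ maps each entry $x$ of a real matrix to $1$ if $x\ge 1/2$ and to $0$ otherwise; for $\mathbf{B}\in\{0,1\}^{m\times n}$, $\mathrm{rrank}(\mathbf{B})=\min\{\mathrm{rank}(\mathbf{A}):\mathbf{A}\in\mathbb{R}^{m\times n},\ \mathrm{round}(\mathbf{A})=\mathbf{B}\}$. *)

theory Defs
  imports "HOL-Analysis.Analysis"
begin

text \<open>Entities are indexed by a finite type 'n (N = CARD('n)), relations by a
finite type 'k (K = CARD('k)).\<close>

definition complex_score ::
  "nat \<Rightarrow> ('n \<Rightarrow> nat \<Rightarrow> complex) \<Rightarrow> ('k \<Rightarrow> nat \<Rightarrow> complex) \<Rightarrow> 'n \<Rightarrow> 'n \<Rightarrow> 'k \<Rightarrow> real"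
  where "complex_score r A R i j k = Re (\<Sum>l<r. A i l * R k l * cnj (A j l))"

definition ComplEx_models :: "nat \<Rightarrow> ('n \<Rightarrow> 'n \<Rightarrow> 'k \<Rightarrow> real) set"
  where "ComplEx_models r = {S. \<exists>A R. S = complex_score r A R}"

definition dense_rank :: "('n::finite \<Rightarrow> 'n \<Rightarrow> 'k \<Rightarrow> real) \<Rightarrow> 'n \<Rightarrow> 'n \<Rightarrow> 'k \<Rightarrow> nat"
  where "dense_rank S i j k =
     1 + card {v. (\<exists>i' j'. S i' j' k = v) \<and> v > S i j k}"

definition consistent :: "('n \<Rightarrow> 'n \<Rightarrow> 'k \<Rightarrow> nat) \<Rightarrow> ('n \<Rightarrow> 'n \<Rightarrow> 'k \<Rightarrow> bool) \<Rightarrow> bool"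
  where "consistent P B \<longleftrightarrow>
     (\<forall>k i j i' j'. B i j k \<and> \<not> B i' j' k \<longrightarrow> P i j k < P i' j' k)"

definition rrank :: "('m::finite \<Rightarrow> 'n::finite \<Rightarrow> bool) \<Rightarrow> nat"
  where "rrank B = (LEAST q. \<exists>A :: real^'n^'m.
            (\<forall>i j. (A $ i $ j \<ge> 1/2) = B i j) \<and> rank A = q)"

end

theory Submission
  imports Defs
begin

lemma dense_rank_mono:
  fixes S :: "'n::finite \<Rightarrow> 'n \<Rightarrow> 'k \<Rightarrow> real"
  assumes "S i' j' k < S i j k"
  shows "dense_rank S i j k < dense_rank S i' j' k"
proof -
  let ?V = "{v. (\<exists>a b. S a b k = v) \<and> v > S i j k}"
  let ?W = "{v. (\<exists>a b. S a b k = v) \<and> v > S i' j' k}"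
  have fin: "finite ?W"
    by (rule finite_subset[of _ "(\<lambda>(a,b). S a b k) ` UNIV"]) auto
  have "?V \<subset> ?W"
  proof
    show "?V \<subseteq> ?W" using assms by auto
    show "?V \<noteq> ?W"
    proof
      assume "?V = ?W"
      moreover have "S i j k \<in> ?W" using assms by auto
      ultimately show False by auto
    qed
  qed
  hence "card ?V < card ?W" using fin psubset_card_mono by blast
  thus ?thesis unfolding dense_rank_def by simp
qed

lemma sep_consistent:
  fixes S :: "'n::finite \<Rightarrow> 'n \<Rightarrow> 'k \<Rightarrow> real"
  assumes "\<And>i j k. B i j k \<Longrightarrow> S i j k > \<theta> k"
    and "\<And>i j k. \<not> B i j k \<Longrightarrow> S i j k < \<theta> k"
  shows "consistent (dense_rank S) B"
  unfolding consistent_def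
proof (intro allI impI)
  fix k i j i' j' assume "B i j k \<and> \<not> B i' j' k"
  hence "S i' j' k < S i j k" using assms by (meson less_trans)
  thus "dense_rank S i j k < dense_rank S i' j' k" by (rule dense_rank_mono)
qed

lemma embed:
  fixes I :: "'c set" and x :: "'n \<Rightarrow> 'c \<Rightarrow> complex" and \<rho> :: "'k \<Rightarrow> 'c \<Rightarrow> complex"
  assumes fin: "finite I" and c: "card I \<le> r"
  shows "(\<lambda>i j k. Re (\<Sum>c\<in>I. x i c * \<rho> k c * cnj (x j c))) \<in> ComplEx_models r"
proof -
  obtain h where h: "h ` I \<subseteq> {..<r}" "inj_on h I"
    using card_le_inj[OF fin, of "{..<r}"] c by auto
  define A where "A i l = (if l \<in> h ` I then x i (the_inv_into I h l) else 0)" for i l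
  define R where "R k l = (if l \<in> h ` I then \<rho> k (the_inv_into I h l) else 0)" for k l
  have eq: "complex_score r A R i j k = Re (\<Sum>c\<in>I. x i c * \<rho> k c * cnj (x j c))" for i j k
  proof -
    have "(\<Sum>l<r. A i l * R k l * cnj (A j l)) = (\<Sum>l\<in>h ` I. A i l * R k l * cnj (A j l))"
      by (rule sum.mono_neutral_right) (use h in \<open>auto simp: A_def R_def\<close>)
    also have "\<dots> = (\<Sum>c\<in>I. A i (h c) * R k (h c) * cnj (A j (h c)))"
      by (rule sum.reindex[OF h(2), unfolded comp_def])
    also have "\<dots> = (\<Sum>c\<in>I. x i c * \<rho> k c * cnj (x j c))"
      by (rule sum.cong) (use h in \<open>auto simp: A_def R_def the_inv_into_f_f\<close>)
    finally show ?thesis unfolding complex_score_def by simp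
  qed
  have "complex_score r A R = (\<lambda>i j k. Re (\<Sum>c\<in>I. x i c * \<rho> k c * cnj (x j c)))"
    by (intro ext) (rule eq)
  thus ?thesis unfolding ComplEx_models_def by (intro CollectI exI) (rule sym)
qed

lemma block_sum:
  fixes J :: "'k::finite \<Rightarrow> 'c set" and f :: "'k \<times> 'c \<Rightarrow> complex"
  assumes "\<And>k. finite (J k)"
  shows "(\<Sum>c\<in>(SIGMA k:UNIV. J k). f c * (if fst c = k0 then g (snd c) else 0) * h c)
       = (\<Sum>c\<in>J k0. f (k0,c) * g c * h (k0, c))"
proof -
  have "(\<Sum>c\<in>(SIGMA k:UNIV. J k). f c * (if fst c = k0 then g (snd c) else 0) * h c)
     = (\<Sum>k\<in>UNIV. \<Sum>c\<in>J k. f (k,c) * (if k = k0 then g c else 0) * h (k,c))"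
  proof -
    have "(\<Sum>k\<in>UNIV. \<Sum>c\<in>J k. f (k,c) * (if k = k0 then g c else 0) * h (k,c))
       = (\<Sum>(k,c)\<in>(SIGMA k:UNIV. J k). f (k,c) * (if k = k0 then g c else 0) * h (k,c))"
      by (rule sum.Sigma) (use assms in auto)
    also have "\<dots> = (\<Sum>c\<in>(SIGMA k:UNIV. J k). f c * (if fst c = k0 then g (snd c) else 0) * h c)"
      by (rule sum.cong) auto
    finally show ?thesis by simp
  qed
  also have "\<dots> = (\<Sum>k\<in>UNIV. if k = k0 then (\<Sum>c\<in>J k. f (k,c) * g c * h (k,c)) else 0)"
    by (rule sum.cong) auto
  also have "\<dots> = (\<Sum>c\<in>J k0. f (k0,c) * g c * h (k0, c))"
    by simp
  finally show ?thesis .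
qed

definition rho1 :: "('n \<Rightarrow> 'n \<Rightarrow> real) \<Rightarrow> 'n \<Rightarrow> complex"
  where "rho1 \<sigma> l = Complex (\<sigma> l l) 1"
definition z1 :: "('n \<Rightarrow> 'n \<Rightarrow> real) \<Rightarrow> 'n \<Rightarrow> 'n \<Rightarrow> complex"
  where "z1 \<sigma> i l = (if i = l then 0 else
     Complex ((\<sigma> i l + \<sigma> l i) * \<sigma> l l / 4) ((\<sigma> l i - \<sigma> i l) / 4))"
definition x1 :: "real \<Rightarrow> ('n \<Rightarrow> 'n \<Rightarrow> real) \<Rightarrow> 'n \<Rightarrow> 'n \<Rightarrow> complex"
  where "x1 \<epsilon> \<sigma> i l = (if i = l then 1 else 0) + of_real \<epsilon> * z1 \<sigma> i l"

lemma expand1: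
  fixes \<sigma> :: "'n::finite \<Rightarrow> 'n \<Rightarrow> real"
  shows "(\<Sum>l\<in>UNIV. x1 \<epsilon> \<sigma> i l * rho1 \<sigma> l * cnj (x1 \<epsilon> \<sigma> j l)) =
     (if i = j then rho1 \<sigma> i else 0) + of_real \<epsilon> * (rho1 \<sigma> i * cnj (z1 \<sigma> j i) + z1 \<sigma> i j * rho1 \<sigma> j)
     + of_real (\<epsilon>^2) * (\<Sum>l\<in>UNIV. z1 \<sigma> i l * rho1 \<sigma> l * cnj (z1 \<sigma> j l))"
proof -
  have t: "x1 \<epsilon> \<sigma> i l * rho1 \<sigma> l * cnj (x1 \<epsilon> \<sigma> j l) =
     (if i = l \<and> j = l then rho1 \<sigma> l else 0)
     + of_real \<epsilon> * ((if i = l then rho1 \<sigma> l * cnj (z1 \<sigma> j l) else 0) + (if j = l then z1 \<sigma> i l * rho1 \<sigma> l else 0))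
     + of_real (\<epsilon>^2) * (z1 \<sigma> i l * rho1 \<sigma> l * cnj (z1 \<sigma> j l))" for l
    by (simp add: x1_def algebra_simps power2_eq_square)
  show ?thesis
    unfolding t sum.distrib sum_distrib_left[symmetric]
    by (simp add: sum_distrib_left[symmetric] if_distrib sum.neutral)
qed

lemma case1_sign:
  fixes \<sigma> :: "'n::finite \<Rightarrow> 'n \<Rightarrow> real"
  assumes \<sigma>: "\<And>a b. \<sigma> a b = 1 \<or> \<sigma> a b = -1"
  defines "\<epsilon> \<equiv> 1 / (4 * real CARD('n))"
  shows "\<sigma> i j * Re (\<Sum>l\<in>UNIV. x1 \<epsilon> \<sigma> i l * rho1 \<sigma> l * cnj (x1 \<epsilon> \<sigma> j l)) > 0"
proof -
  let ?N = "real CARD('n)"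
  have N: "?N \<ge> 1" by simp
  have sq: "\<sigma> a b * \<sigma> a b = 1" for a b using \<sigma>[of a b] by auto
  have ab: "\<bar>\<sigma> a b\<bar> = 1" for a b using \<sigma>[of a b] by auto
  have epos: "\<epsilon> > 0" unfolding \<epsilon>_def using N by simp
  have eN: "\<epsilon> * ?N = 1/4" unfolding \<epsilon>_def using N by simp
  define Q where "Q = (\<Sum>l\<in>UNIV. z1 \<sigma> i l * rho1 \<sigma> l * cnj (z1 \<sigma> j l))"
  have nz: "norm (z1 \<sigma> a b) \<le> 1" for a b
  proof -
    have "norm (z1 \<sigma> a b) \<le> \<bar>Re (z1 \<sigma> a b)\<bar> + \<bar>Im (z1 \<sigma> a b)\<bar>" by (rule cmod_le)
    also have "\<dots> \<le> 1/2 + 1/2"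
    proof (cases "a = b")
      case False
      have "\<bar>(\<sigma> a b + \<sigma> b a) * \<sigma> b b / 4\<bar> \<le> 1/2"
        using \<sigma>[of a b] \<sigma>[of b a] \<sigma>[of b b] by auto
      moreover have "\<bar>(\<sigma> b a - \<sigma> a b) / 4\<bar> \<le> 1/2"
        using \<sigma>[of a b] \<sigma>[of b a] by auto
      ultimately show ?thesis using False by (simp add: z1_def)
    qed (simp add: z1_def)
    finally show ?thesis by simp
  qed
  have nr: "norm (rho1 \<sigma> a) \<le> 2" for a
  proof -
    have "norm (rho1 \<sigma> a) \<le> \<bar>Re (rho1 \<sigma> a)\<bar> + \<bar>Im (rho1 \<sigma> a)\<bar>" by (rule cmod_le)
    thus ?thesis using ab[of a a] by (simp add: rho1_def)
  qed
  have "norm Q \<le> (\<Sum>l\<in>UNIV. norm (z1 \<sigma> i l * rho1 \<sigma> l * cnj (z1 \<sigma> j l)))"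
    unfolding Q_def by (rule norm_sum)
  also have "\<dots> \<le> (\<Sum>l\<in>(UNIV::'n set). 2)"
  proof (rule sum_mono)
    fix l
    have "norm (z1 \<sigma> i l * rho1 \<sigma> l * cnj (z1 \<sigma> j l)) = norm (z1 \<sigma> i l) * norm (rho1 \<sigma> l) * norm (z1 \<sigma> j l)"
      by (simp add: norm_mult)
    also have "\<dots> \<le> 1 * 2 * 1"
      by (intro mult_mono nz nr) auto
    finally show "norm (z1 \<sigma> i l * rho1 \<sigma> l * cnj (z1 \<sigma> j l)) \<le> 2" by simp
  qed
  finally have "norm Q \<le> 2 * ?N" by simp
  hence RQ: "\<bar>Re Q\<bar> \<le> 2 * ?N" using abs_Re_le_cmod order_trans by blast
  have lin: "Re (rho1 \<sigma> i * cnj (z1 \<sigma> j i) + z1 \<sigma> i j * rho1 \<sigma> j) = (if i = j then 0 else \<sigma> i j)"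
  proof (cases "i = j")
    case False
    have "Re (rho1 \<sigma> i * cnj (z1 \<sigma> j i) + z1 \<sigma> i j * rho1 \<sigma> j)
       = (\<sigma> j i + \<sigma> i j) * (\<sigma> i i * \<sigma> i i) / 4 + (\<sigma> i j - \<sigma> j i)/4
         + ((\<sigma> i j + \<sigma> j i) * (\<sigma> j j * \<sigma> j j) / 4 - (\<sigma> j i - \<sigma> i j) / 4)"
      using False by (simp add: z1_def rho1_def algebra_simps)
    also have "\<dots> = \<sigma> i j" by (simp add: sq field_simps)
    finally show ?thesis using False by simp
  qed (simp add: z1_def)
  have s: "Re (\<Sum>l\<in>UNIV. x1 \<epsilon> \<sigma> i l * rho1 \<sigma> l * cnj (x1 \<epsilon> \<sigma> j l))
      = (if i = j then \<sigma> i i else 0) + \<epsilon> * (if i = j then 0 else \<sigma> i j) + \<epsilon>^2 * Re Q"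
    unfolding expand1 Q_def[symmetric] using lin by (simp add: rho1_def)
  have bnd: "\<bar>\<sigma> i j * (\<epsilon>^2 * Re Q)\<bar> \<le> \<epsilon> / 2"
  proof -
    have "\<bar>\<sigma> i j * (\<epsilon>^2 * Re Q)\<bar> = \<epsilon> * (\<epsilon> * \<bar>Re Q\<bar>)"
      using ab[of i j] epos by (simp add: abs_mult power2_eq_square)
    also have "\<dots> \<le> \<epsilon> * (\<epsilon> * (2 * ?N))"
      using RQ epos by (intro mult_left_mono) auto
    also have "\<dots> = \<epsilon> / 2" using eN by (simp add: algebra_simps)
    finally show ?thesis .
  qed
  have e1: "\<epsilon> \<le> 1/4" unfolding \<epsilon>_def using N by (simp add: field_simps)
  show ?thesis
  proof (cases "i = j")
    case True
    then show ?thesis unfolding s using bnd e1 sq[of j j] by (simp add: algebra_simps; linarith)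
  next
    case False
    then show ?thesis unfolding s using bnd epos sq[of i j] by (simp add: algebra_simps; linarith)
  qed
qed

lemma case1:
  fixes B :: "'n::finite \<Rightarrow> 'n \<Rightarrow> 'k::finite \<Rightarrow> bool"
  assumes "r \<ge> CARD('k) * CARD('n)"
  shows "\<exists>P \<in> dense_rank ` (ComplEx_models r :: ('n \<Rightarrow> 'n \<Rightarrow> 'k \<Rightarrow> real) set). consistent P B"
proof -
  define \<sigma> where "\<sigma> k a b = (if B a b k then 1 else -1 :: real)" for k a b
  define \<epsilon> where "\<epsilon> = 1 / (4 * real CARD('n))"
  define I where "I = (SIGMA k:(UNIV::'k set). (UNIV::'n set))"
  define x where "x i c = x1 \<epsilon> (\<sigma> (fst c)) i (snd c)" for i and c :: "'k \<times> 'n"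
  define \<rho> where "\<rho> k0 c = (if fst c = k0 then rho1 (\<sigma> k0) (snd c) else 0)" for k0 and c :: "'k \<times> 'n"
  let ?S = "(\<lambda>i j k. Re (\<Sum>c\<in>I. x i c * \<rho> k c * cnj (x j c))) :: 'n \<Rightarrow> 'n \<Rightarrow> 'k \<Rightarrow> real"
  have cI: "card I = CARD('k) * CARD('n)" unfolding I_def by simp
  have mem: "?S \<in> ComplEx_models r"
    by (rule embed) (use cI assms in \<open>auto simp: I_def\<close>)
  have S: "?S i j k = Re (\<Sum>l\<in>UNIV. x1 \<epsilon> (\<sigma> k) i l * rho1 (\<sigma> k) l * cnj (x1 \<epsilon> (\<sigma> k) j l))" for i j k
    unfolding I_def \<rho>_def by (subst block_sum) (auto simp: x_def)
  have pos: "\<sigma> k i j * ?S i j k > 0" for i j k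
    unfolding S \<epsilon>_def by (rule case1_sign) (auto simp: \<sigma>_def)
  have "consistent (dense_rank ?S) B"
  proof (rule sep_consistent[where \<theta> = "\<lambda>_. 0"])
    fix i j k assume "B i j k" thus "?S i j k > 0" using pos[of k i j] by (simp add: \<sigma>_def)
  next
    fix i j k assume "\<not> B i j k" thus "?S i j k < 0" using pos[of k i j] by (simp add: \<sigma>_def)
  qed
  thus ?thesis using mem by blast
qed

definition xg :: "('t \<Rightarrow> 'n \<Rightarrow> real) \<Rightarrow> ('t \<Rightarrow> 'n \<Rightarrow> real) \<Rightarrow> 'n \<Rightarrow> 't \<times> bool \<Rightarrow> complex"
  where "xg u v i c = (if snd c then Complex ((u (fst c) i + v (fst c) i)/2) ((u (fst c) i - v (fst c) i)/2)
                     else complex_of_real ((u (fst c) i - v (fst c) i)/2))"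
definition rhog :: "'t \<times> bool \<Rightarrow> complex"
  where "rhog c = (if snd c then Complex 1 (-1) else -2)"

lemma gad1: "Re (\<Sum>b\<in>UNIV. xg u v i (t,b) * rhog (t,b) * cnj (xg u v j (t,b))) = u t i * v t j"
  by (simp add: UNIV_bool xg_def rhog_def field_simps)

lemma gadget:
  assumes "finite T"
  shows "Re (\<Sum>c\<in>T \<times> UNIV. xg u v i c * rhog c * cnj (xg u v j c)) = (\<Sum>t\<in>T. u t i * v t j)"
proof -
  have "(\<Sum>c\<in>T \<times> UNIV. xg u v i c * rhog c * cnj (xg u v j c))
      = (\<Sum>t\<in>T. \<Sum>b\<in>UNIV. xg u v i (t,b) * rhog (t,b) * cnj (xg u v j (t,b)))"
    unfolding sum.cartesian_product by (simp add: case_prod_unfold)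
  also have "Re \<dots> = (\<Sum>t\<in>T. Re (\<Sum>b\<in>UNIV. xg u v i (t,b) * rhog (t,b) * cnj (xg u v j (t,b))))"
    by (rule Re_sum)
  also have "\<dots> = (\<Sum>t\<in>T. u t i * v t j)"
    by (rule sum.cong) (rule refl, rule gad1)
  finally show ?thesis .
qed

lemma sep_consistent2:
  fixes S :: "'n::finite \<Rightarrow> 'n \<Rightarrow> 'k \<Rightarrow> real"
  assumes "\<And>i j k. B i j k \<Longrightarrow> S i j k \<ge> \<theta> k"
    and "\<And>i j k. \<not> B i j k \<Longrightarrow> S i j k < \<theta> k"
  shows "consistent (dense_rank S) B"
  unfolding consistent_def
proof (intro allI impI)
  fix k i j i' j' assume "B i j k \<and> \<not> B i' j' k"
  hence "S i' j' k < S i j k" using assms by (meson less_le_trans)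
  thus "dense_rank S i j k < dense_rank S i' j' k" by (rule dense_rank_mono)
qed

lemma case2:
  fixes B :: "'n::finite \<Rightarrow> 'n \<Rightarrow> 'k::finite \<Rightarrow> bool"
  assumes "r \<ge> 2 * (\<Sum>k\<in>UNIV. rrank (\<lambda>i j. B i j k))"
  shows "\<exists>P \<in> dense_rank ` (ComplEx_models r :: ('n \<Rightarrow> 'n \<Rightarrow> 'k \<Rightarrow> real) set). consistent P B"
proof -
  have exA: "\<forall>k. \<exists>A :: real^'n^'n. (\<forall>i j. (A $ i $ j \<ge> 1/2) = B i j k) \<and> rank A = rrank (\<lambda>i j. B i j k)"
  proof
    fix k
    let ?P = "\<lambda>q. \<exists>A :: real^'n^'n. (\<forall>i j. (A $ i $ j \<ge> 1/2) = B i j k) \<and> rank A = q"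
    have "?P (rank ((\<chi> i j. if B i j k then 1 else 0) :: real^'n^'n))"
      by (rule exI[of _ "(\<chi> i j. if B i j k then 1 else 0) :: real^'n^'n"]) auto
    hence "?P (LEAST q. ?P q)" by (rule LeastI)
    thus "?P (rrank (\<lambda>i j. B i j k))" unfolding rrank_def .
  qed
  obtain Am where Am0: "\<forall>k. (\<forall>i j. (Am k $ i $ j \<ge> 1/2) = B i j k) \<and> rank (Am k :: real^'n^'n) = rrank (\<lambda>i j. B i j k)"
    using choice[OF exA] by blast
  have Am: "\<And>k i j. (Am k $ i $ j \<ge> 1/2) = B i j k" "\<And>k. rank (Am k) = rrank (\<lambda>i j. B i j k)"
    using Am0 by auto
  have exB: "\<forall>k. \<exists>Bb. independent Bb \<and> rows (Am k) \<subseteq> span Bb \<and> card Bb = dim (rows (Am k))"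
  proof
    fix k
    obtain Bb where "Bb \<subseteq> rows (Am k)" "independent Bb" "rows (Am k) \<subseteq> span Bb" "card Bb = dim (rows (Am k))"
      by (rule basis_exists)
    thus "\<exists>Bb. independent Bb \<and> rows (Am k) \<subseteq> span Bb \<and> card Bb = dim (rows (Am k))" by blast
  qed
  obtain Bs where Bs0: "\<forall>k. independent (Bs k) \<and> rows (Am k) \<subseteq> span (Bs k) \<and> card (Bs k) = dim (rows (Am k))"
    using choice[OF exB] by blast
  have Bs: "\<And>k. independent (Bs k)" "\<And>k. rows (Am k) \<subseteq> span (Bs k)"
      "\<And>k. card (Bs k) = dim (rows (Am k))"
    using Bs0 by auto
  have finB: "finite (Bs k)" for k using independent_bound Bs(1) by blast
  have cardB: "card (Bs k) = rrank (\<lambda>i j. B i j k)" for k using Bs(3) Am(2) by (simp add: row_rank_def)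
  have excf: "\<forall>p. \<exists>cf. row (snd p) (Am (fst p)) = (\<Sum>b\<in>Bs (fst p). cf b *\<^sub>R b)"
  proof
    fix p :: "'k \<times> 'n"
    have "row (snd p) (Am (fst p)) \<in> span (Bs (fst p))" using Bs(2)[of "fst p"] by (auto simp: rows_def)
    thus "\<exists>cf. row (snd p) (Am (fst p)) = (\<Sum>b\<in>Bs (fst p). cf b *\<^sub>R b)"
      unfolding span_finite[OF finB] by auto
  qed
  obtain cf0 where cf0: "\<forall>p. row (snd p) (Am (fst p)) = (\<Sum>b\<in>Bs (fst p). cf0 p b *\<^sub>R b)"
    using choice[OF excf] by blast
  define cf where "cf k i = cf0 (k,i)" for k i
  have cf: "\<And>k i. row i (Am k) = (\<Sum>b\<in>Bs k. cf k i b *\<^sub>R b)"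
    using cf0 unfolding cf_def by (metis fst_conv snd_conv)
  have Aent: "Am k $ i $ j = (\<Sum>b\<in>Bs k. cf k i b * b $ j)" for k i j
  proof -
    have "Am k $ i $ j = row i (Am k) $ j" by (simp add: row_def)
    also have "\<dots> = (\<Sum>b\<in>Bs k. cf k i b * b $ j)" unfolding cf by (simp add: sum_component)
    finally show ?thesis .
  qed
  define I where "I = (SIGMA k:(UNIV::'k set). (Bs k \<times> (UNIV :: bool set)))"
  define x where "x i c = xg (\<lambda>b i. cf (fst c) i b) (\<lambda>b j. b $ j) i (snd c)" for i and c :: "'k \<times> (real^'n) \<times> bool"
  define \<rho> where "\<rho> k0 c = (if fst c = k0 then rhog (snd c) else 0)" for k0 and c :: "'k \<times> (real^'n) \<times> bool"
  let ?S = "(\<lambda>i j k. Re (\<Sum>c\<in>I. x i c * \<rho> k c * cnj (x j c))) :: 'n \<Rightarrow> 'n \<Rightarrow> 'k \<Rightarrow> real"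
  have "card I = (\<Sum>k\<in>UNIV. card (Bs k) * 2)" unfolding I_def using finB by (simp add: card_cartesian_product)
  also have "\<dots> = 2 * (\<Sum>k\<in>UNIV. rrank (\<lambda>i j. B i j k))" by (simp add: cardB sum_distrib_left mult.commute)
  finally have cI: "card I \<le> r" using assms by simp
  have mem: "?S \<in> ComplEx_models r"
    by (rule embed) (use cI finB in \<open>auto simp: I_def\<close>)
  have S: "?S i j k = Am k $ i $ j" for i j k
  proof -
    have "?S i j k = Re (\<Sum>c\<in>Bs k \<times> UNIV. xg (\<lambda>b i. cf k i b) (\<lambda>b j. b $ j) i c * rhog c * cnj (xg (\<lambda>b i. cf k i b) (\<lambda>b j. b $ j) j c))"
      unfolding I_def \<rho>_def by (subst block_sum) (auto simp: x_def finB)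
    also have "\<dots> = Am k $ i $ j" unfolding Aent by (rule gadget[OF finB])
    finally show ?thesis .
  qed
  have "consistent (dense_rank ?S) B"
  proof (rule sep_consistent2[where \<theta> = "\<lambda>_. 1/2"])
    fix i j k assume "B i j k" thus "?S i j k \<ge> 1/2" using Am(1)[of k i j] S by simp
  next
    fix i j k assume "\<not> B i j k" thus "?S i j k < 1/2" using Am(1)[of k i j] S by simp
  qed
  thus ?thesis using mem by blast
qed

theorem theorem12:
  fixes B :: "'n::finite \<Rightarrow> 'n \<Rightarrow> 'k::finite \<Rightarrow> bool"
    and r :: nat
  assumes "CARD('n) \<ge> 2"
    and "r \<ge> 1"
    and "r \<ge> min (CARD('k) * CARD('n)) (2 * (\<Sum>k\<in>UNIV. rrank (\<lambda>i j. B i j k)))"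
  shows "\<exists>P \<in> dense_rank ` (ComplEx_models r :: ('n \<Rightarrow> 'n \<Rightarrow> 'k \<Rightarrow> real) set).
           consistent P B"
proof (cases "CARD('k) * CARD('n) \<le> 2 * (\<Sum>k\<in>UNIV. rrank (\<lambda>i j. B i j k))")
  case True
  then show ?thesis using assms(3) by (intro case1) simp
next
  case False
  then show ?thesis using assms(3) by (intro case2) simp
qed

end
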